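(* Let $N'$ be a positive integer. For every integer $c$ with $1\le c\le 2N'-1$ and every $s\in\mathbb{C}$ with $\Re(s)>2$, $$\zeta(-c,s+c)=\sum_{d=1}^{N'}\frac{a_{c+1,d}}{2}\,T(-d+1,-d+1;s+2d-2).$$
   Context: For $\Re(s)>2$ and an integer $c\ge0$, $\zeta(-c,s+c)=\sum_{1\le n_1<n_2} n_1^{c}n_2^{-s-c}=\sum_{m,n\ge1}m^c(m+n)^{-s-c}$ (Euler–Zagier double zeta function). $T(s_1,s_2;s):=\sum_{m,n\ge1} m^{-s_1}n^{-s_2}(m+n)^{-s}$ is the Tornheim double zeta function. $(a_{c,d})_{c,d\ge1}$ are the integers defined by: $a_{c,1}=1$ for $c\ge1$; $a_{1,d}=a_{2,d}=0$ for $d\ge2$; $a_{3,2}=-2$ and $a_{3,d}=0$ for $d\ge3$; and $a_{c+2,d+1}=a_{c+1,d+1}-a_{c,d}$ for $c\ge2$, $d\ge1$. *)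

theory Defs
  imports "HOL-Analysis.Analysis"
begin

definition EZ_zeta2 :: "complex \<Rightarrow> complex \<Rightarrow> complex" where
  "EZ_zeta2 s1 s2 =
     infsum (\<lambda>(n1, n2). of_nat n1 powr (-s1) * of_nat n2 powr (-s2))
            {(n1, n2). 1 \<le> n1 \<and> n1 < (n2::nat)}"

definition tornheim :: "complex \<Rightarrow> complex \<Rightarrow> complex \<Rightarrow> complex" where
  "tornheim s1 s2 s =
     infsum (\<lambda>(m, n). of_nat m powr (-s1) * of_nat n powr (-s2) * of_nat (m + n) powr (-s))
            ({1..} \<times> {1..} :: (nat \<times> nat) set)"

fun acoef :: "nat \<Rightarrow> nat \<Rightarrow> int" where
  "acoef 0 d = 0"
| "acoef (Suc c) 0 = 0"
| "acoef (Suc c) (Suc 0) = 1"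
| "acoef (Suc 0) (Suc (Suc d)) = 0"
| "acoef (Suc (Suc 0)) (Suc (Suc d)) = 0"
| "acoef (Suc (Suc (Suc 0))) (Suc (Suc 0)) = -2"
| "acoef (Suc (Suc (Suc 0))) (Suc (Suc (Suc d))) = 0"
| "acoef (Suc (Suc (Suc (Suc c)))) (Suc (Suc d)) =
     acoef (Suc (Suc (Suc c))) (Suc (Suc d)) - acoef (Suc (Suc c)) (Suc d)"

end

theory Submission
  imports Defs
begin

lemma acoef_vanish: "1 \<le> c \<Longrightarrow> c + 1 < 2 * d \<Longrightarrow> acoef c d = 0"
  by (induction c d rule: acoef.induct) auto

lemma acoef_one: "acoef (Suc c) (Suc 0) = 1" by simp

lemma acoef_rec: "1 \<le> c \<Longrightarrow> acoef (c + 3) (d + 2) = acoef (c + 2) (d + 2) - acoef (c + 1) (d + 1)"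
  by (cases c) (auto simp: numeral_eq_Suc)

lemma acoef_2: "acoef 2 (Suc (Suc d)) = 0" by (simp add: numeral_eq_Suc)
lemma acoef_3: "acoef 3 (Suc (Suc 0)) = -2" "acoef 3 (Suc (Suc (Suc d))) = 0" by (simp_all add: numeral_eq_Suc)

lemma fixt: 
  fixes t :: "'a::comm_ring_1"
  assumes "1 \<le> c"
  shows "of_int (acoef (c + 2) (d + 1)) * (t * t ^ (c + 1 - 2 * d)) = of_int (acoef (c + 2) (d + 1)) * t ^ (c + 2 - 2 * d)"
proof (cases "2 * d \<le> c + 1")
  case True
  then have "c + 2 - 2 * d = Suc (c + 1 - 2 * d)" by simp
  then show ?thesis by simp
next
  case False
  then have "acoef (c + 2) (d + 1) = 0" by (intro acoef_vanish) auto
  then show ?thesis by simp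
qed

lemma power_ident:
  fixes x y :: "'a::comm_ring_1"
  assumes "1 \<le> c" "c < 2 * K"
  shows "x ^ c + y ^ c = (\<Sum>d<K. of_int (acoef (c + 1) (d + 1)) * (x * y) ^ d * (x + y) ^ (c - 2 * d))"
  using assms
proof (induction c rule: less_induct)
  case (less c)
  obtain K' where K: "K = Suc K'" using less.prems by (cases K) auto
  consider "c = 1" | "c = 2" | c' where "c = c' + 2" "1 \<le> c'" using less.prems
  proof -
    assume h1: "c = 1 \<Longrightarrow> thesis" and h2: "c = 2 \<Longrightarrow> thesis" and h3: "\<And>c'. c = c' + 2 \<Longrightarrow> 1 \<le> c' \<Longrightarrow> thesis"
    show thesis
    proof (cases "c \<le> 2")
      case True then show ?thesis using h1 h2 less.prems(1) by linarith
    next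
      case False then show ?thesis using h3[of "c - 2"] by simp
    qed
  qed
  then show ?case
  proof cases
    case 1
    then show ?thesis unfolding K sum.lessThan_Suc_shift by (simp add: acoef_2)
  next
    case 2
    then obtain K'' where K': "K' = Suc K''" using less.prems K by (cases K') auto
    show ?thesis using 2 unfolding K K' sum.lessThan_Suc_shift
      by (simp add: acoef_3 numeral_eq_Suc algebra_simps power2_eq_square)
  next
    case 3
    let ?p = "x * y" and ?t = "x + y"
    have IH1: "x ^ (c'+1) + y ^ (c'+1) = (\<Sum>d<K. of_int (acoef (c' + 2) (d + 1)) * ?p ^ d * ?t ^ (c' + 1 - 2 * d))"
      using less.IH[of "c'+1"] 3 less.prems by simp
    have IH0: "x ^ c' + y ^ c' = (\<Sum>d<K. of_int (acoef (c' + 1) (d + 1)) * ?p ^ d * ?t ^ (c' - 2 * d))"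
      using less.IH[of "c'"] 3 less.prems by simp
    have rec: "x ^ c + y ^ c = ?t * (x ^ (c'+1) + y ^ (c'+1)) - ?p * (x ^ c' + y ^ c')"
      using 3 by (simp add: algebra_simps)
    have A: "?t * (x ^ (c'+1) + y ^ (c'+1)) = ?t ^ (c' + 2) + (\<Sum>e<K'. of_int (acoef (c' + 2) (e + 2)) * ?p ^ (e+1) * ?t ^ (c' - 2 * e))"
    proof -
      have "?t * (x ^ (c'+1) + y ^ (c'+1)) = (\<Sum>d<K. of_int (acoef (c' + 2) (d + 1)) * ?p ^ d * ?t ^ (c' + 2 - 2 * d))"
        unfolding IH1 sum_distrib_left
      proof (rule sum.cong[OF refl])
        fix d
        have "?t * (of_int (acoef (c' + 2) (d + 1)) * ?p ^ d * ?t ^ (c' + 1 - 2 * d)) =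
           ?p ^ d * (of_int (acoef (c' + 2) (d + 1)) * (?t * ?t ^ (c' + 1 - 2 * d)))" by (simp add: algebra_simps)
        also have "\<dots> = ?p ^ d * (of_int (acoef (c' + 2) (d + 1)) * ?t ^ (c' + 2 - 2 * d))"
          using fixt[OF \<open>1 \<le> c'\<close>] by metis
        finally show "?t * (of_int (acoef (c' + 2) (d + 1)) * ?p ^ d * ?t ^ (c' + 1 - 2 * d)) =
           of_int (acoef (c' + 2) (d + 1)) * ?p ^ d * ?t ^ (c' + 2 - 2 * d)" by (simp add: algebra_simps)
      qed
      also have "\<dots> = ?t ^ (c' + 2) + (\<Sum>e<K'. of_int (acoef (c' + 2) (e + 2)) * ?p ^ (e+1) * ?t ^ (c' - 2 * e))"
        unfolding K sum.lessThan_Suc_shift by (simp add: numeral_eq_Suc)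
      finally show ?thesis .
    qed
    have B: "?p * (x ^ c' + y ^ c') = (\<Sum>e<K'. of_int (acoef (c' + 1) (e + 1)) * ?p ^ (e+1) * ?t ^ (c' - 2 * e))"
    proof -
      have z: "acoef (c' + 1) (K' + 1) = 0" using 3 less.prems K by (intro acoef_vanish) auto
      show ?thesis unfolding IH0 sum_distrib_left K sum.lessThan_Suc z
        by (simp add: algebra_simps sum_distrib_left)
    qed
    have "(\<Sum>d<K. of_int (acoef (c + 1) (d + 1)) * ?p ^ d * ?t ^ (c - 2 * d))
       = ?t ^ (c' + 2) + (\<Sum>e<K'. of_int (acoef (c' + 3) (e + 2)) * ?p ^ (e+1) * ?t ^ (c' - 2 * e))"
      unfolding K sum.lessThan_Suc_shift using 3 by (simp add: numeral_eq_Suc)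
    also have "\<dots> = ?t ^ (c' + 2) + (\<Sum>e<K'. (of_int (acoef (c' + 2) (e + 2)) - of_int (acoef (c' + 1) (e + 1))) * ?p ^ (e+1) * ?t ^ (c' - 2 * e))"
      using acoef_rec[OF \<open>1 \<le> c'\<close>] by simp
    also have "\<dots> = ?t * (x ^ (c'+1) + y ^ (c'+1)) - ?p * (x ^ c' + y ^ c')"
      unfolding A B by (simp add: algebra_simps sum_subtractf)
    finally show ?thesis using rec by simp
  qed
qed

lemma infsum_finsum:
  fixes F :: "'i \<Rightarrow> 'a \<Rightarrow> complex"
  assumes "finite I" "\<And>i. i \<in> I \<Longrightarrow> F i summable_on A"
  shows "(\<lambda>x. \<Sum>i\<in>I. F i x) summable_on A \<and> infsum (\<lambda>x. \<Sum>i\<in>I. F i x) A = (\<Sum>i\<in>I. infsum (F i) A)"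
  using assms
proof (induction I rule: finite_induct)
  case empty then show ?case by simp
next
  case (insert i I)
  then show ?case by (simp add: summable_on_add infsum_add)
qed

lemma prod_summable:
  fixes a :: real
  assumes "a > 1"
  shows "(\<lambda>(m,n). real m powr (-a) * real n powr (-a)) summable_on (UNIV :: (nat \<times> nat) set)"
proof -
  let ?g = "\<lambda>k::nat. real k powr (-a)"
  have gs: "?g summable_on UNIV"
    by (rule summable_nonneg_imp_summable_on) (use assms in \<open>auto simp: summable_real_powr_iff\<close>)
  have "(\<lambda>x. ?g (fst x) * ?g (snd x)) summable_on Sigma UNIV (\<lambda>_. UNIV)"
  proof (rule summable_on_SigmaI[where g = "\<lambda>m. ?g m * infsum ?g UNIV"])
    fix m :: nat
    show "((\<lambda>n. ?g (fst (m, n)) * ?g (snd (m, n))) has_sum ?g m * infsum ?g UNIV) UNIV"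
      using has_sum_cmult_right[OF gs[unfolded summable_iff_has_sum_infsum], of "?g m"] by simp
  next
    show "(\<lambda>m. ?g m * infsum ?g UNIV) summable_on UNIV"
      using summable_on_cmult_left[OF gs] by simp
  qed auto
  then show ?thesis by (simp add: case_prod_unfold)
qed

lemma bound_summable:
  fixes \<sigma> :: real
  assumes "\<sigma> > 2"
  shows "(\<lambda>(m,n). real (m + n) powr (-\<sigma>)) summable_on ({1..} \<times> {1..} :: (nat \<times> nat) set)"
proof -
  have "(\<lambda>(m,n). real m powr (-(\<sigma>/2)) * real n powr (-(\<sigma>/2))) summable_on ({1..} \<times> {1..} :: (nat \<times> nat) set)"
    using prod_summable[of "\<sigma>/2"] assms summable_on_subset_banach by fastforce
  then show ?thesis
  proof (rule summable_on_comparison_test)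
    fix x :: "nat \<times> nat" assume x: "x \<in> {1..} \<times> {1..}"
    obtain m n where mn: "x = (m, n)" "m \<ge> 1" "n \<ge> 1" using x by auto
    have "real m * real n \<le> real (m + n) powr 2"
      using mn by (simp add: power2_eq_square algebra_simps)
    then have "(real m * real n) powr (\<sigma>/2) \<le> (real (m + n) powr 2) powr (\<sigma>/2)"
      using assms by (intro powr_mono2) auto
    also have "\<dots> = real (m + n) powr \<sigma>" by (subst powr_powr) simp
    finally have "real m powr (\<sigma>/2) * real n powr (\<sigma>/2) \<le> real (m + n) powr \<sigma>"
      by (simp add: powr_mult)
    then have "inverse (real (m + n) powr \<sigma>) \<le> inverse (real m powr (\<sigma>/2) * real n powr (\<sigma>/2))"
      using mn by (intro le_imp_inverse_le) auto
    then show "(case x of (m, n) \<Rightarrow> real (m + n) powr - \<sigma>) \<le> (case x of (m, n) \<Rightarrow> real m powr - (\<sigma> / 2) * real n powr - (\<sigma> / 2))"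
      using mn by (simp add: powr_minus)
  qed auto
qed

lemma norm_nat_powr: "norm (of_nat m powr z :: complex) = real m powr Re z"
  by (subst norm_powr_real_powr) auto

lemma f_summable:
  fixes c :: nat and s :: complex
  assumes "Re s > 2"
  shows "(\<lambda>(m,n). of_nat m powr of_nat c * of_nat (m + n) powr (-(s + of_nat c)) :: complex)
           summable_on ({1..} \<times> {1..} :: (nat \<times> nat) set)"
proof (rule abs_summable_summable, rule summable_on_comparison_test[OF bound_summable[OF assms(1)]])
  fix x :: "nat \<times> nat" assume x: "x \<in> {1..} \<times> {1..}"
  obtain m n where mn: "x = (m, n)" "m \<ge> 1" "n \<ge> 1" using x by auto
  have "real m powr real c * real (m + n) powr (- Re s - real c) \<le> real (m + n) powr real c * real (m + n) powr (- Re s - real c)"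
    using mn by (intro mult_right_mono powr_mono2) auto
  also have "\<dots> = real (m + n) powr (- Re s)" by (simp add: powr_add[symmetric])
  finally show "norm (case x of (m,n) \<Rightarrow> (of_nat m powr of_nat c * of_nat (m + n) powr (-(s + of_nat c)) :: complex))
     \<le> (case x of (m,n) \<Rightarrow> real (m + n) powr (-Re s))"
    using mn by (simp add: norm_mult norm_nat_powr norm_power powr_realpow del: of_nat_add)
qed auto

lemma T_summable:
  fixes d :: nat and s :: complex
  assumes "Re s > 2" "d \<ge> 1"
  shows "(\<lambda>(m, n). of_nat m powr (-(1 - of_nat d)) * of_nat n powr (-(1 - of_nat d)) * of_nat (m + n) powr (-(s + 2 * of_nat d - 2)) :: complex)
           summable_on ({1..} \<times> {1..} :: (nat \<times> nat) set)"
proof (rule abs_summable_summable, rule summable_on_comparison_test[OF bound_summable[OF assms(1)]])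
  fix x :: "nat \<times> nat" assume x: "x \<in> {1..} \<times> {1..}"
  obtain m n where mn: "x = (m, n)" "m \<ge> 1" "n \<ge> 1" using x by auto
  have "real m powr (real d - 1) * real n powr (real d - 1) * real (m + n) powr (2 - (Re s + 2 * real d))
     \<le> real (m + n) powr (real d - 1) * real (m + n) powr (real d - 1) * real (m + n) powr (2 - (Re s + 2 * real d))"
    using mn assms by (intro mult_right_mono mult_mono powr_mono2) auto
  also have "\<dots> = real (m + n) powr (- Re s)" by (simp add: powr_add[symmetric])
  finally show "norm (case x of (m, n) \<Rightarrow> (of_nat m powr (-(1 - of_nat d)) * of_nat n powr (-(1 - of_nat d)) * of_nat (m + n) powr (-(s + 2 * of_nat d - 2)) :: complex))
     \<le> (case x of (m,n) \<Rightarrow> real (m + n) powr (-Re s))"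
    using mn by (simp add: norm_mult norm_nat_powr del: of_nat_add)
qed auto

lemma term_eq:
  fixes x y :: complex and c d :: nat
  assumes "x \<noteq> 0" "y \<noteq> 0" "x + y \<noteq> 0" "1 \<le> c"
  shows "of_int (acoef (c + 1) (d + 1)) * (x * y) ^ d * (x + y) ^ (c - 2 * d) * (x + y) powr (-(s + of_nat c))
    = of_int (acoef (c + 1) (Suc d)) * (x powr (-(1 - of_nat (Suc d))) * y powr (-(1 - of_nat (Suc d)))
        * (x + y) powr (-(s + 2 * of_nat (Suc d) - 2)))"
proof (cases "2 * d \<le> c")
  case True
  have e1: "-(1 - of_nat (Suc d)) = (of_nat d :: complex)" by simp
  have e2: "-(s + 2 * of_nat (Suc d) - 2) = of_nat (c - 2 * d) + (-(s + of_nat c))"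
    using True by (simp add: of_nat_diff algebra_simps)
  have "(x + y) ^ (c - 2 * d) * (x + y) powr (-(s + of_nat c)) = (x + y) powr (-(s + 2 * of_nat (Suc d) - 2))"
    unfolding e2 powr_add using assms by (simp add: powr_nat')
  moreover have "x powr (-(1 - of_nat (Suc d))) = x ^ d" "y powr (-(1 - of_nat (Suc d))) = y ^ d"
    unfolding e1 using assms by (simp_all add: powr_nat')
  ultimately show ?thesis by (simp add: power_mult_distrib algebra_simps)
next
  case False
  then have "acoef (c + 1) (d + 1) = 0" by (intro acoef_vanish) auto
  then show ?thesis by simp
qed

lemma pointwise:
  fixes c N' m n :: nat and s :: complex
  assumes "1 \<le> c" "c < 2 * N'" "m \<ge> 1" "n \<ge> 1"
  shows "of_nat m powr of_nat c * of_nat (m + n) powr (-(s + of_nat c))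
       + of_nat n powr of_nat c * of_nat (n + m) powr (-(s + of_nat c))
     = (\<Sum>d = 1..N'. of_int (acoef (c + 1) d) * (of_nat m powr (-(1 - of_nat d)) * of_nat n powr (-(1 - of_nat d))
           * of_nat (m + n) powr (-(s + 2 * of_nat d - 2))))"
proof -
  define x :: complex where "x = of_nat m"
  define y :: complex where "y = of_nat n"
  have nz: "x \<noteq> 0" "y \<noteq> 0" "x + y \<noteq> 0" using assms unfolding x_def y_def
    by (simp_all del: of_nat_add add: of_nat_add[symmetric])
  have "of_nat m powr of_nat c * of_nat (m + n) powr (-(s + of_nat c))
       + of_nat n powr of_nat c * of_nat (n + m) powr (-(s + of_nat c))
       = (x ^ c + y ^ c) * (x + y) powr (-(s + of_nat c))"
    using nz assms unfolding x_def y_def by (simp add: powr_nat' algebra_simps)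
  also have "\<dots> = (\<Sum>d<N'. of_int (acoef (c + 1) (d + 1)) * (x * y) ^ d * (x + y) ^ (c - 2 * d) * (x + y) powr (-(s + of_nat c)))"
    unfolding power_ident[OF assms(1,2)] sum_distrib_right ..
  also have "\<dots> = (\<Sum>d<N'. of_int (acoef (c + 1) (Suc d)) * (x powr (-(1 - of_nat (Suc d))) * y powr (-(1 - of_nat (Suc d)))
        * (x + y) powr (-(s + 2 * of_nat (Suc d) - 2))))"
    by (rule sum.cong[OF refl], rule term_eq[OF nz assms(1)])
  also have "\<dots> = (\<Sum>d = Suc 0..N'. of_int (acoef (c + 1) d) * (x powr (-(1 - of_nat d)) * y powr (-(1 - of_nat d))
        * (x + y) powr (-(s + 2 * of_nat d - 2))))"
    by (rule sum.atLeast1_atMost_eq[symmetric])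
  finally show ?thesis unfolding x_def y_def by simp
qed

theorem proposition3p3:
  fixes N' c :: nat and s :: complex
  assumes "1 \<le> N'" and "1 \<le> c" and "c \<le> 2 * N' - 1" and "Re s > 2"
  shows "EZ_zeta2 (- of_nat c) (s + of_nat c) =
    (\<Sum>d = 1..N'. (of_int (acoef (c + 1) d) / 2) *
        tornheim (1 - of_nat d) (1 - of_nat d) (s + 2 * of_nat d - 2))"
proof -
  define U where "U = ({1..} \<times> {1..} :: (nat \<times> nat) set)"
  define F where "F = (\<lambda>(m,n). of_nat m powr of_nat c * of_nat (m + n) powr (-(s + of_nat c)) :: complex)"
  define Tt where "Tt = (\<lambda>d::nat. \<lambda>(m, n). of_nat m powr (-(1 - of_nat d)) * of_nat n powr (-(1 - of_nat d)) * of_nat (m + n) powr (-(s + 2 * of_nat d - 2)) :: complex)"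
  have c2: "c < 2 * N'" using assms by linarith
  define h where "h = (\<lambda>(m, n). (m, m + n :: nat))"
  have injh: "inj_on h U" unfolding h_def U_def inj_on_def by auto
  have imh: "h ` U = {(n1, n2). 1 \<le> n1 \<and> n1 < (n2::nat)}"
  proof (intro equalityI subsetI)
    fix p assume "p \<in> {(n1, n2). 1 \<le> n1 \<and> n1 < (n2::nat)}"
    then obtain a b where p: "p = (a, b)" "1 \<le> a" "a < b" by auto
    then have "h (a, b - a) = p" "(a, b - a) \<in> U" unfolding h_def U_def by auto
    then show "p \<in> h ` U" by force
  qed (auto simp: h_def U_def)
  have EZ: "EZ_zeta2 (- of_nat c) (s + of_nat c) = infsum F U"
    unfolding EZ_zeta2_def imh[symmetric] infsum_reindex[OF injh]
    by (rule infsum_cong) (auto simp: F_def h_def)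
  have injs: "inj_on prod.swap U" by simp
  have ims: "prod.swap ` U = U" unfolding U_def by auto
  have sw: "infsum F U = infsum (F \<circ> prod.swap) U"
    using infsum_reindex[OF injs, of F] ims by simp
  have Fs: "F summable_on U" unfolding F_def U_def by (rule f_summable[OF assms(4)])
  have Fs2: "(F \<circ> prod.swap) summable_on U"
    using summable_on_reindex[OF injs, of F] ims Fs by simp
  have Ts: "(\<lambda>x. of_int (acoef (c + 1) d) * Tt d x) summable_on U" if "d \<in> {1..N'}" for d
  proof -
    have "Tt d summable_on U" unfolding Tt_def U_def by (rule T_summable[OF assms(4)]) (use that in auto)
    then show ?thesis by (rule summable_on_cmult_right)
  qed
  have "2 * infsum F U = infsum F U + infsum (F \<circ> prod.swap) U" using sw by simp
  also have "\<dots> = infsum (\<lambda>x. F x + (F \<circ> prod.swap) x) U" using infsum_add[OF Fs Fs2] by simp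
  also have "\<dots> = infsum (\<lambda>x. \<Sum>d = 1..N'. of_int (acoef (c + 1) d) * Tt d x) U"
  proof (rule infsum_cong)
    fix x assume "x \<in> U"
    then obtain m n where "x = (m, n)" "m \<ge> 1" "n \<ge> 1" unfolding U_def by auto
    then show "F x + (F \<circ> prod.swap) x = (\<Sum>d = 1..N'. of_int (acoef (c + 1) d) * Tt d x)"
      using pointwise[OF assms(2) c2, of m n s] by (simp add: F_def Tt_def)
  qed
  also have "\<dots> = (\<Sum>d = 1..N'. infsum (\<lambda>x. of_int (acoef (c + 1) d) * Tt d x) U)"
    using infsum_finsum[of "{1..N'}" "\<lambda>d x. of_int (acoef (c + 1) d) * Tt d x" U] Ts by simp
  also have "\<dots> = (\<Sum>d = 1..N'. of_int (acoef (c + 1) d) * tornheim (1 - of_nat d) (1 - of_nat d) (s + 2 * of_nat d - 2))"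
  proof (rule sum.cong[OF refl])
    fix d assume d: "d \<in> {1..N'}"
    have "infsum (Tt d) U = tornheim (1 - of_nat d) (1 - of_nat d) (s + 2 * of_nat d - 2)"
      unfolding tornheim_def Tt_def U_def ..
    then show "infsum (\<lambda>x. of_int (acoef (c + 1) d) * Tt d x) U = of_int (acoef (c + 1) d) * tornheim (1 - of_nat d) (1 - of_nat d) (s + 2 * of_nat d - 2)"
      using infsum_cmult_right[of "of_int (acoef (c + 1) d)" "Tt d" U] d
        T_summable[OF assms(4), of d] by (simp add: Tt_def U_def)
  qed
  finally have "2 * infsum F U = (\<Sum>d = 1..N'. of_int (acoef (c + 1) d) * tornheim (1 - of_nat d) (1 - of_nat d) (s + 2 * of_nat d - 2))" .
  then have "infsum F U = (\<Sum>d = 1..N'. of_int (acoef (c + 1) d) * tornheim (1 - of_nat d) (1 - of_nat d) (s + 2 * of_nat d - 2)) / 2"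
    by (simp add: field_simps mult.commute)
  then show ?thesis unfolding EZ by (simp add: sum_divide_distrib)
qed

end
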